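(* Let $M$ be an entrywise nonnegative $m\times n$ real matrix and let $M=AW$ be a stable nonnegative matrix factorization with $A\in\mathbb{R}_{\ge0}^{m\times r}$, $W\in\mathbb{R}_{\ge0}^{r\times n}$. Let $s=\mathrm{rank}(A)$, let $U\subseteq[m]$ be a set of $s$ linearly independent rows of $A$, and let $B_1,\dots,B_p$ be the ensemble of $A$ at $U$. Then for each column index $i$, $W_i$ is contained in the set $\{B_1M_i^U,\dots,B_pM_i^U\}$.
   Context: Notation: $M_i$ is the $i$-th column, $M^j$ the $j$-th row; $A_S$ denotes columns in $S$, $A^U$ rows in $U$, $M_i^U$ the entries of $M_i$ in rows $U$. $\mathrm{aff}(A)=\{\sum_i\alpha_iA_i:\alpha_i\ge0\}$. A subset $S\subseteq[r]$ of columns of $A$ is admissible for $v\in\mathbb{R}^m$ if $v\in\mathrm{aff}(A_S)$; a subset $T\subseteq[r]$ of rows of $W$ is admissible for a row vector $u$ if $u$ is a nonnegative combination of the rows of $W^T$. Lexicographic ordering on subsets of $[r]$: if $|S|<|T|$ then $S$ precedes $T$; equal-size subsets compared by standard lexicographic order. $M=AW$ is stable if, with $S_i$ the lexicographically first subset of columns of $A$ admissible for $M_i$ and $T_j$ the lexicographically first subset of rows of $W$ admissible for $M^j$, each $W_i$ is supported in $S_i$ and each row $A^j$ is supported in $T_j$. Ensemble: let $S_1,\dots,S_p$ be all sets of $s$ linearly independent columns of $A$, in lexicographic order; $B_k$ is the $r\times s$ matrix that is zero on rows outside $S_k$ and whose restriction to rows $S_k$ equals $(A^U_{S_k})^{-1}$.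 *)

theory Defs
  imports Complex_Main
begin

text \<open>Matrices are functions nat \<Rightarrow> nat \<Rightarrow> real with explicit dimensions:
  X j k is the entry in row j, column k.  Index sets are subsets of {..<d}.\<close>

definition nonneg_mat :: "(nat \<Rightarrow> nat \<Rightarrow> real) \<Rightarrow> nat \<Rightarrow> nat \<Rightarrow> bool" where
  "nonneg_mat X d1 d2 \<longleftrightarrow> (\<forall>j<d1. \<forall>k<d2. 0 \<le> X j k)"

definition is_product :: "(nat \<Rightarrow> nat \<Rightarrow> real) \<Rightarrow> (nat \<Rightarrow> nat \<Rightarrow> real) \<Rightarrow> (nat \<Rightarrow> nat \<Rightarrow> real)
    \<Rightarrow> nat \<Rightarrow> nat \<Rightarrow> nat \<Rightarrow> bool" where
  "is_product M A W m r n \<longleftrightarrow> (\<forall>j<m. \<forall>i<n. M j i = (\<Sum>k<r. A j k * W k i))"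

definition lin_indep_cols :: "(nat \<Rightarrow> nat \<Rightarrow> real) \<Rightarrow> nat \<Rightarrow> nat set \<Rightarrow> bool" where
  "lin_indep_cols A m S \<longleftrightarrow>
     (\<forall>c. (\<forall>j<m. (\<Sum>k\<in>S. c k * A j k) = 0) \<longrightarrow> (\<forall>k\<in>S. c k = 0))"

definition lin_indep_rows :: "(nat \<Rightarrow> nat \<Rightarrow> real) \<Rightarrow> nat \<Rightarrow> nat set \<Rightarrow> bool" where
  "lin_indep_rows A r U \<longleftrightarrow>
     (\<forall>c. (\<forall>k<r. (\<Sum>j\<in>U. c j * A j k) = 0) \<longrightarrow> (\<forall>j\<in>U. c j = 0))"

definition mat_rank :: "(nat \<Rightarrow> nat \<Rightarrow> real) \<Rightarrow> nat \<Rightarrow> nat \<Rightarrow> nat" where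
  "mat_rank A m r = Max {card S | S. S \<subseteq> {..<r} \<and> lin_indep_cols A m S}"

definition subset_lex_less :: "nat set \<Rightarrow> nat set \<Rightarrow> bool" where
  "subset_lex_less S T \<longleftrightarrow> card S < card T \<or>
     (card S = card T \<and>
      (sorted_list_of_set S, sorted_list_of_set T) \<in> lexord {(a, b). a < b})"

definition col_admissible :: "(nat \<Rightarrow> nat \<Rightarrow> real) \<Rightarrow> nat \<Rightarrow> (nat \<Rightarrow> real) \<Rightarrow> nat set \<Rightarrow> bool" where
  "col_admissible A m v S \<longleftrightarrow>
     (\<exists>\<alpha>. (\<forall>k\<in>S. 0 \<le> \<alpha> k) \<and> (\<forall>j<m. v j = (\<Sum>k\<in>S. \<alpha> k * A j k)))"

definition row_admissible :: "(nat \<Rightarrow> nat \<Rightarrow> real) \<Rightarrow> nat \<Rightarrow> (nat \<Rightarrow> real) \<Rightarrow> nat set \<Rightarrow> bool" where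
  "row_admissible W n u T \<longleftrightarrow>
     (\<exists>\<beta>. (\<forall>k\<in>T. 0 \<le> \<beta> k) \<and> (\<forall>i<n. u i = (\<Sum>k\<in>T. \<beta> k * W k i)))"

definition lexfirst_col_adm :: "(nat \<Rightarrow> nat \<Rightarrow> real) \<Rightarrow> nat \<Rightarrow> nat \<Rightarrow> (nat \<Rightarrow> real) \<Rightarrow> nat set \<Rightarrow> bool" where
  "lexfirst_col_adm A m r v S \<longleftrightarrow> S \<subseteq> {..<r} \<and> col_admissible A m v S \<and>
     (\<forall>T. T \<subseteq> {..<r} \<and> col_admissible A m v T \<longrightarrow> T = S \<or> subset_lex_less S T)"

definition lexfirst_row_adm :: "(nat \<Rightarrow> nat \<Rightarrow> real) \<Rightarrow> nat \<Rightarrow> nat \<Rightarrow> (nat \<Rightarrow> real) \<Rightarrow> nat set \<Rightarrow> bool" where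
  "lexfirst_row_adm W n r u T \<longleftrightarrow> T \<subseteq> {..<r} \<and> row_admissible W n u T \<and>
     (\<forall>T'. T' \<subseteq> {..<r} \<and> row_admissible W n u T' \<longrightarrow> T' = T \<or> subset_lex_less T T')"

definition stable_fact :: "(nat \<Rightarrow> nat \<Rightarrow> real) \<Rightarrow> (nat \<Rightarrow> nat \<Rightarrow> real) \<Rightarrow> (nat \<Rightarrow> nat \<Rightarrow> real)
    \<Rightarrow> nat \<Rightarrow> nat \<Rightarrow> nat \<Rightarrow> bool" where
  "stable_fact M A W m r n \<longleftrightarrow>
     (\<forall>i<n. \<forall>S. lexfirst_col_adm A m r (\<lambda>j. M j i) S \<longrightarrow> (\<forall>k<r. k \<notin> S \<longrightarrow> W k i = 0)) \<and>
     (\<forall>j<m. \<forall>T. lexfirst_row_adm W n r (\<lambda>i. M j i) T \<longrightarrow> (\<forall>k<r. k \<notin> T \<longrightarrow> A j k = 0))"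

definition sub_inv :: "(nat \<Rightarrow> nat \<Rightarrow> real) \<Rightarrow> nat set \<Rightarrow> nat set \<Rightarrow> nat \<Rightarrow> nat \<Rightarrow> real" where
  "sub_inv A U S = (THE C. (\<forall>a b. a \<notin> S \<or> b \<notin> U \<longrightarrow> C a b = 0) \<and>
      (\<forall>a\<in>S. \<forall>b\<in>S. (\<Sum>u\<in>U. C a u * A u b) = (if a = b then 1 else 0)) \<and>
      (\<forall>u\<in>U. \<forall>v\<in>U. (\<Sum>a\<in>S. A u a * C a v) = (if u = v then 1 else 0)))"

text \<open>The matrix B_S (r x s, columns indexed by U): zero on rows outside S, and equal to
  (A^U_S)^{-1} on rows S.\<close>
definition ens_mat :: "(nat \<Rightarrow> nat \<Rightarrow> real) \<Rightarrow> nat set \<Rightarrow> nat set \<Rightarrow> nat \<Rightarrow> nat \<Rightarrow> real" where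
  "ens_mat A U S = (\<lambda>k u. if k \<in> S \<and> u \<in> U then sub_inv A U S k u else 0)"

definition ensemble :: "(nat \<Rightarrow> nat \<Rightarrow> real) \<Rightarrow> nat \<Rightarrow> nat \<Rightarrow> nat set \<Rightarrow> (nat \<Rightarrow> nat \<Rightarrow> real) set" where
  "ensemble A m r U = {ens_mat A U S | S. S \<subseteq> {..<r} \<and> card S = mat_rank A m r \<and> lin_indep_cols A m S}"

end

theory Submission
  imports Defs "HOL-Library.Function_Algebras" "HOL-Library.List_Lexorder"
begin


lemma sum_app: "(sum g P) (j::nat) = (\<Sum>p\<in>P. g p j)" for g :: "nat \<Rightarrow> nat \<Rightarrow> real"
  by (induct P rule: infinite_finite_induct) (auto simp: plus_fun_def zero_fun_def)

interpretation fv: vector_space "\<lambda>(c::real) (f::nat\<Rightarrow>real). (\<lambda>j. c * f j)"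
  by unfold_locales (auto simp: plus_fun_def algebra_simps)

lemma steinitz:
  fixes x y :: "nat \<Rightarrow> nat \<Rightarrow> real"
  assumes fP: "finite P" and fQ: "finite Q"
   and ind: "\<And>c. \<forall>j. (\<Sum>p\<in>P. c p * x p j) = 0 \<Longrightarrow> \<forall>p\<in>P. c p = 0"
   and sp: "\<And>p. p\<in>P \<Longrightarrow> \<exists>d. \<forall>j. x p j = (\<Sum>q\<in>Q. d q * y q j)"
  shows "card P \<le> card Q"
proof -
  have inj: "inj_on x P"
  proof (rule inj_onI, rule ccontr)
    fix p1 p2 assume h: "p1\<in>P" "p2\<in>P" "x p1 = x p2" "p1 \<noteq> p2"
    define c where "c p = (if p = p1 then 1 else if p = p2 then -1 else (0::real))" for p
    have "\<forall>j. (\<Sum>p\<in>P. c p * x p j) = 0"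
    proof
      fix j
      have "(\<Sum>p\<in>P. c p * x p j) = (\<Sum>p\<in>{p1,p2}. c p * x p j)"
        by (rule sum.mono_neutral_right) (use h fP in \<open>auto simp: c_def\<close>)
      also have "\<dots> = 0" using h by (simp add: c_def)
      finally show "(\<Sum>p\<in>P. c p * x p j) = 0" .
    qed
    from ind[OF this] h show False by (auto simp: c_def)
  qed
  have indep: "fv.independent (x ` P)"
  proof (rule fv.independent_if_scalars_zero)
    show "finite (x`P)" using fP by simp
    fix f v assume s: "(\<Sum>v\<in>x`P. (\<lambda>j. f v * v j)) = 0" and v: "v \<in> x`P"
    have "\<forall>j. (\<Sum>p\<in>P. f (x p) * x p j) = 0"
    proof
      fix j
      have "(\<Sum>v\<in>x`P. (\<lambda>j. f v * v j)) j = 0" using s by (simp add: zero_fun_def)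
      then show "(\<Sum>p\<in>P. f (x p) * x p j) = 0" using inj by (simp add: sum_app sum.reindex)
    qed
    from ind[OF this] v show "f v = 0" by auto
  qed
  have "x ` P \<subseteq> fv.span (y ` Q)"
  proof
    fix v assume "v \<in> x`P"
    then obtain p where p: "p\<in>P" "v = x p" by auto
    obtain d where d: "\<forall>j. x p j = (\<Sum>q\<in>Q. d q * y q j)" using sp[OF p(1)] by auto
    have "v = (\<Sum>q\<in>Q. (\<lambda>j. d q * y q j))" by (rule ext) (simp add: sum_app d p)
    also have "\<dots> \<in> fv.span (y`Q)"
      by (rule fv.span_sum) (intro fv.span_scale fv.span_base; auto)
    finally show "v \<in> fv.span (y`Q)" .
  qed
  from fv.independent_span_bound[OF _ indep this] fQ have "card (x`P) \<le> card (y`Q)" by auto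
  then show ?thesis using card_image[OF inj] card_image_le[OF fQ, of y] by linarith
qed

lemma indep_ext:
  fixes x :: "nat \<Rightarrow> nat \<Rightarrow> real"
  assumes fP: "finite P" and p0: "p0 \<notin> P"
   and ind: "\<And>c. \<forall>j. (\<Sum>p\<in>P. c p * x p j) = 0 \<Longrightarrow> \<forall>p\<in>P. c p = 0"
   and nsp: "\<not>(\<exists>d. \<forall>j. w j = (\<Sum>p\<in>P. d p * x p j))"
   and h: "\<forall>j. (\<Sum>p\<in>insert p0 P. c p * (x(p0:=w)) p j) = 0"
  shows "\<forall>p\<in>insert p0 P. c p = 0"
proof -
  have e: "c p0 * w j + (\<Sum>p\<in>P. c p * x p j) = 0" for j
  proof -
    have "(\<Sum>p\<in>P. c p * (x(p0:=w)) p j) = (\<Sum>p\<in>P. c p * x p j)"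
      by (rule sum.cong) (use p0 in auto)
    with h[rule_format, of j] show ?thesis using fP p0 by simp
  qed
  have c0: "c p0 = 0"
  proof (rule ccontr)
    assume nz: "c p0 \<noteq> 0"
    have "\<forall>j. w j = (\<Sum>p\<in>P. (- c p / c p0) * x p j)"
    proof
      fix j
      have "(\<Sum>p\<in>P. (- c p / c p0) * x p j) = - (\<Sum>p\<in>P. c p * x p j) / c p0"
        by (simp add: sum_divide_distrib sum_negf)
      also have "\<dots> = w j" using e[of j] nz by (simp add: field_simps)
      finally show "w j = (\<Sum>p\<in>P. (- c p / c p0) * x p j)" by simp
    qed
    then have "\<exists>d. \<forall>j. w j = (\<Sum>p\<in>P. d p * x p j)" by (rule exI[where x="\<lambda>p. - c p / c p0"])
    with nsp show False by blast
  qed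
  have "\<forall>p\<in>P. c p = 0" using ind e c0 by simp
  with c0 show ?thesis by simp
qed



definition colv :: "(nat \<Rightarrow> nat \<Rightarrow> real) \<Rightarrow> nat \<Rightarrow> nat \<Rightarrow> nat \<Rightarrow> real" where
  "colv A m k = (\<lambda>j. if j < m then A j k else 0)"

lemma sum_colv: "(\<Sum>k\<in>S. c k * colv A m k j) = (if j < m then (\<Sum>k\<in>S. c k * A j k) else 0)"
  by (cases "j < m") (simp_all add: colv_def)

lemma indep_colv: "lin_indep_cols A m S \<longleftrightarrow> (\<forall>c. (\<forall>j. (\<Sum>k\<in>S. c k * colv A m k j) = 0) \<longrightarrow> (\<forall>k\<in>S. c k = 0))"
  unfolding lin_indep_cols_def sum_colv by (metis (no_types, lifting))

lemma span_colv: "(\<exists>D. \<forall>j. colv A m k j = (\<Sum>k'\<in>S. D k' * colv A m k' j)) \<longleftrightarrow>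
   (\<exists>D. \<forall>j<m. A j k = (\<Sum>k'\<in>S. D k' * A j k'))"
  unfolding sum_colv by (auto simp: colv_def)

lemma rank_fin: "finite {card S |S. S \<subseteq> {..<r} \<and> lin_indep_cols A m S}"
proof -
  have "{card S |S. S \<subseteq> {..<r} \<and> lin_indep_cols A m S} \<subseteq> card ` Pow {..<r}" by auto
  then show ?thesis by (rule finite_subset) simp
qed

lemma rank_ge: "S \<subseteq> {..<r} \<Longrightarrow> lin_indep_cols A m S \<Longrightarrow> card S \<le> mat_rank A m r"
  unfolding mat_rank_def by (rule Max_ge[OF rank_fin]) auto

lemma rank_attained: "\<exists>S. S \<subseteq> {..<r} \<and> lin_indep_cols A m S \<and> card S = mat_rank A m r"
proof -
  have "lin_indep_cols A m {}" by (simp add: lin_indep_cols_def)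
  then have "{card S |S. S \<subseteq> {..<r} \<and> lin_indep_cols A m S} \<noteq> {}" by blast
  from Max_in[OF rank_fin this] show ?thesis unfolding mat_rank_def by auto
qed

lemma insert_indep:
  assumes S: "S \<subseteq> {..<r}" and ind: "lin_indep_cols A m S" and k: "k \<notin> S"
    and nsp: "\<not> (\<exists>D. \<forall>j<m. A j k = (\<Sum>k'\<in>S. D k' * A j k'))"
  shows "lin_indep_cols A m (insert k S)"
proof -
  have fS: "finite S" using S finite_subset by blast
  have e: "(colv A m)(k := colv A m k) = colv A m" by simp
  show ?thesis unfolding indep_colv
  proof (intro allI impI)
    fix c assume h: "\<forall>j. (\<Sum>k\<in>insert k S. c k * colv A m k j) = 0"
    show "\<forall>k\<in>insert k S. c k = 0"
      by (rule indep_ext[OF fS k, of "colv A m" "colv A m k" c])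
        (use ind nsp h in \<open>auto simp: indep_colv span_colv e\<close>)
  qed
qed

lemma maximal_span:
  assumes S: "S \<subseteq> {..<r}" and ind: "lin_indep_cols A m S"
    and mx: "\<And>k. k < r \<Longrightarrow> k \<notin> S \<Longrightarrow> \<not> lin_indep_cols A m (insert k S)"
    and k: "k < r"
  shows "\<exists>D. \<forall>j<m. A j k = (\<Sum>k'\<in>S. D k' * A j k')"
proof (cases "k \<in> S")
  case True
  have fS: "finite S" using S finite_subset by blast
  show ?thesis
  proof (rule exI[where x="\<lambda>k'. if k' = k then 1 else 0"], intro allI impI)
    fix j assume "j < m"
    show "A j k = (\<Sum>k'\<in>S. (if k' = k then 1 else 0) * A j k')"
    proof -
      have "(\<Sum>k'\<in>S. (if k' = k then 1 else 0) * A j k') = (\<Sum>k'\<in>S. if k' = k then A j k' else 0)"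
        by (rule sum.cong) auto
      then show ?thesis using True fS by simp
    qed
  qed
next
  case False
  then show ?thesis using insert_indep[OF S ind False] mx[OF k False] by blast
qed

lemma full_span:
  assumes S: "S \<subseteq> {..<r}" and ind: "lin_indep_cols A m S" and c: "card S = mat_rank A m r"
    and k: "k < r"
  shows "\<exists>D. \<forall>j<m. A j k = (\<Sum>k'\<in>S. D k' * A j k')"
proof (rule maximal_span[OF S ind _ k])
  fix k assume k: "k < r" "k \<notin> S"
  have fS: "finite S" using S finite_subset by blast
  show "\<not> lin_indep_cols A m (insert k S)"
  proof
    assume "lin_indep_cols A m (insert k S)"
    from rank_ge[OF _ this] S k have "card (insert k S) \<le> mat_rank A m r" by auto
    with fS k c show False by simp
  qed
qed

lemma extend_indep:
  assumes T: "T \<subseteq> {..<r}" and ind: "lin_indep_cols A m T"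
  shows "\<exists>S. T \<subseteq> S \<and> S \<subseteq> {..<r} \<and> lin_indep_cols A m S \<and> card S = mat_rank A m r"
proof -
  define F where "F = {S. T \<subseteq> S \<and> S \<subseteq> {..<r} \<and> lin_indep_cols A m S}"
  have fF: "finite F" unfolding F_def by (rule finite_subset[of _ "Pow {..<r}"]) auto
  have TF: "T \<in> F" using T ind by (simp add: F_def)
  have "Max (card ` F) \<in> card ` F" using fF TF by (intro Max_in) auto
  then obtain S where SF: "S \<in> F" and SM: "card S = Max (card ` F)" by auto
  have big: "card S' \<le> card S" if "S' \<in> F" for S'
    using SM fF that by simp
  have S: "S \<subseteq> {..<r}" "lin_indep_cols A m S" "T \<subseteq> S" using SF by (auto simp: F_def)
  have fS: "finite S" using S finite_subset by blast
  have spS: "\<exists>D. \<forall>j<m. A j k = (\<Sum>k'\<in>S. D k' * A j k')" if "k < r" for k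
  proof (rule maximal_span[OF S(1,2) _ that])
    fix k assume k: "k < r" "k \<notin> S"
    show "\<not> lin_indep_cols A m (insert k S)"
    proof
      assume "lin_indep_cols A m (insert k S)"
      then have "insert k S \<in> F" using S k by (auto simp: F_def)
      from big[OF this] fS k show False by simp
    qed
  qed
  obtain S0 where S0: "S0 \<subseteq> {..<r}" "lin_indep_cols A m S0" "card S0 = mat_rank A m r"
    using rank_attained by blast
  have fS0: "finite S0" using S0 finite_subset by blast
  have "card S0 \<le> card S"
  proof (rule steinitz[OF fS0 fS, of "colv A m" "colv A m"])
    show "\<And>c. \<forall>j. (\<Sum>p\<in>S0. c p * colv A m p j) = 0 \<Longrightarrow> \<forall>p\<in>S0. c p = 0"
      using S0(2) unfolding indep_colv by blast
    show "\<And>p. p \<in> S0 \<Longrightarrow> \<exists>d. \<forall>j. colv A m p j = (\<Sum>q\<in>S. d q * colv A m q j)"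
      using spS S0(1) unfolding span_colv by blast
  qed
  moreover have "card S \<le> mat_rank A m r" using rank_ge[OF S(1,2)] .
  ultimately show ?thesis using S S0 by (intro exI[of _ S]) auto
qed



lemma carath:
  assumes S: "S \<subseteq> {..<r}" and adm: "col_admissible A m v S"
    and mn: "\<And>T. T \<subseteq> {..<r} \<Longrightarrow> col_admissible A m v T \<Longrightarrow> card S \<le> card T"
  shows "lin_indep_cols A m S"
  unfolding lin_indep_cols_def
proof (rule ccontr)
  assume "\<not> (\<forall>c. (\<forall>j<m. (\<Sum>k\<in>S. c k * A j k) = 0) \<longrightarrow> (\<forall>k\<in>S. c k = 0))"
  then obtain c k1 where c: "\<forall>j<m. (\<Sum>k\<in>S. c k * A j k) = 0" and k1: "k1\<in>S" "c k1 \<noteq> 0" by auto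
  obtain \<alpha> where \<alpha>: "\<forall>k\<in>S. 0 \<le> \<alpha> k" "\<forall>j<m. v j = (\<Sum>k\<in>S. \<alpha> k * A j k)"
    using adm unfolding col_admissible_def by blast
  have fS: "finite S" using S finite_subset by blast
  obtain c' where c': "\<forall>j<m. (\<Sum>k\<in>S. c' k * A j k) = 0" "c' k1 > 0"
  proof (cases "c k1 > 0")
    case True then show ?thesis using that c by blast
  next
    case False
    with k1 have "(- c k1) > 0" by simp
    moreover have "\<forall>j<m. (\<Sum>k\<in>S. (- c k) * A j k) = 0" using c by (simp add: sum_negf)
    ultimately show ?thesis using that[of "\<lambda>k. - c k"] by blast
  qed
  define P where "P = {k\<in>S. c' k > 0}"
  have fP: "finite P" and k1P: "k1 \<in> P" using fS k1 c' by (auto simp: P_def)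
  define t where "t = Min ((\<lambda>k. \<alpha> k / c' k) ` P)"
  have "t \<in> (\<lambda>k. \<alpha> k / c' k) ` P" unfolding t_def using fP k1P by (intro Min_in) auto
  then obtain k0 where k0: "k0 \<in> P" "t = \<alpha> k0 / c' k0" by auto
  have tle: "t \<le> \<alpha> k / c' k" if "k \<in> P" for k unfolding t_def using fP that by simp
  have k0S: "k0 \<in> S" and ck0: "c' k0 > 0" using k0 by (auto simp: P_def)
  have t0: "0 \<le> t" using k0 ck0 \<alpha>(1) k0S by simp
  define \<alpha>' where "\<alpha>' k = \<alpha> k - t * c' k" for k
  have nn: "0 \<le> \<alpha>' k" if "k \<in> S" for k
  proof (cases "c' k > 0")
    case True
    then have "k \<in> P" using that by (simp add: P_def)
    from tle[OF this] True have "t * c' k \<le> \<alpha> k" by (simp add: pos_le_divide_eq)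
    then show ?thesis by (simp add: \<alpha>'_def)
  next
    case False
    then have "t * c' k \<le> 0" using t0 by (simp add: mult_nonneg_nonpos)
    moreover have "0 \<le> \<alpha> k" using \<alpha>(1) that by blast
    ultimately show ?thesis by (simp add: \<alpha>'_def)
  qed
  have a0: "\<alpha>' k0 = 0" using ck0 k0(2) by (simp add: \<alpha>'_def)
  have vS: "v j = (\<Sum>k\<in>S. \<alpha>' k * A j k)" if "j < m" for j
  proof -
    have "(\<Sum>k\<in>S. \<alpha>' k * A j k) = (\<Sum>k\<in>S. \<alpha> k * A j k) - t * (\<Sum>k\<in>S. c' k * A j k)"
      by (simp add: \<alpha>'_def algebra_simps sum_subtractf sum_distrib_left)
    then show ?thesis using \<alpha>(2) c'(1) that by simp
  qed
  have "col_admissible A m v (S - {k0})"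
    unfolding col_admissible_def
  proof (intro exI[of _ \<alpha>'] conjI allI impI ballI)
    fix k assume "k \<in> S - {k0}" then show "0 \<le> \<alpha>' k" using nn by simp
  next
    fix j assume j: "j < m"
    have "(\<Sum>k\<in>S. \<alpha>' k * A j k) = \<alpha>' k0 * A j k0 + (\<Sum>k\<in>S - {k0}. \<alpha>' k * A j k)"
      using fS k0S by (simp add: sum.remove)
    then show "v j = (\<Sum>k\<in>S - {k0}. \<alpha>' k * A j k)" using vS[OF j] a0 by simp
  qed
  from mn[OF _ this] S have "card S \<le> card (S - {k0})" by auto
  with fS k0S show False
    by (metis card_Diff1_less leD)
qed

lemma lexfirst_ex:
  assumes T0: "T0 \<subseteq> {..<r}" "col_admissible A m v T0"
  shows "\<exists>S. lexfirst_col_adm A m r v S"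
proof -
  define Adm where "Adm = {T. T \<subseteq> {..<r} \<and> col_admissible A m v T}"
  have fA: "finite Adm" unfolding Adm_def by (rule finite_subset[of _ "Pow {..<r}"]) auto
  have T0A: "T0 \<in> Adm" using T0 by (simp add: Adm_def)
  define c0 where "c0 = Min (card ` Adm)"
  have "c0 \<in> card ` Adm" unfolding c0_def using fA T0A by (intro Min_in) auto
  then obtain T1 where T1: "T1 \<in> Adm" "card T1 = c0" by auto
  have c0le: "c0 \<le> card T" if "T \<in> Adm" for T unfolding c0_def using fA that by simp
  define A0 where "A0 = {T\<in>Adm. card T = c0}"
  define L where "L = sorted_list_of_set ` A0"
  have fL: "finite L" unfolding L_def A0_def using fA by simp
  have "Min L \<in> L" using fL T1 by (intro Min_in) (auto simp: L_def A0_def)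
  then obtain S where SA0: "S \<in> A0" and Sl: "Min L = sorted_list_of_set S" by (auto simp: L_def)
  have SA: "S \<in> Adm" "card S = c0" using SA0 by (auto simp: A0_def)
  have finAdm: "finite T" if "T \<in> Adm" for T using that finite_subset by (auto simp: Adm_def)
  show ?thesis
  proof (rule exI[of _ S], unfold lexfirst_col_adm_def, intro conjI allI impI)
    show "S \<subseteq> {..<r}" "col_admissible A m v S" using SA by (auto simp: Adm_def)
  next
    fix T assume "T \<subseteq> {..<r} \<and> col_admissible A m v T"
    then have TA: "T \<in> Adm" by (simp add: Adm_def)
    show "T = S \<or> subset_lex_less S T"
    proof (cases "card T = c0")
      case False
      with c0le[OF TA] SA show ?thesis by (simp add: subset_lex_less_def)
    next
      case True
      then have "sorted_list_of_set T \<in> L" using TA by (auto simp: L_def A0_def)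
      then have le: "sorted_list_of_set S \<le> sorted_list_of_set T" using fL Sl by (metis Min_le)
      show ?thesis
      proof (cases "T = S")
        case False
        then have "sorted_list_of_set S \<noteq> sorted_list_of_set T"
          using finAdm[OF TA] finAdm[OF SA(1)] by (metis set_sorted_list_of_set)
        with le have "sorted_list_of_set S < sorted_list_of_set T" by simp
        then show ?thesis using True SA by (simp add: subset_lex_less_def list_less_def)
      qed simp
    qed
  qed
qed



lemma sum_e: "finite S \<Longrightarrow> (\<Sum>q\<in>S. f q * (if j = q then 1 else 0)) = (if j \<in> S then f j else (0::real))"
proof -
  assume fS: "finite S"
  have "(\<Sum>q\<in>S. f q * (if j = q then 1 else 0)) = (\<Sum>q\<in>S. if j = q then f q else 0)"
    by (rule sum.cong) auto
  then show ?thesis using fS by (simp add: sum.delta')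
qed

lemma sum_e2: "finite S \<Longrightarrow> (\<Sum>q\<in>S. (if j = q then 1 else 0) * f q) = (if j \<in> S then f j else (0::real))"
  using sum_e[of S f j] by (simp add: mult.commute)

lemma subinv_left:
  assumes S: "S \<subseteq> {..<r}" "lin_indep_cols A m S" "card S = mat_rank A m r"
    and U: "U \<subseteq> {..<m}" "card U = mat_rank A m r" "lin_indep_rows A r U"
  shows "\<forall>a\<in>S. \<forall>b\<in>S. (\<Sum>u\<in>U. sub_inv A U S a u * A u b) = (if a = b then 1 else 0)"
proof -
  have fS: "finite S" using S(1) finite_subset by blast
  have fU: "finite U" using U(1) finite_subset by blast
  have spS: "\<And>k. k<r \<Longrightarrow> \<exists>D. \<forall>j<m. A j k = (\<Sum>k'\<in>S. D k' * A j k')"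
    using full_span[OF S] by blast
  define \<rho> where "\<rho> u = (\<lambda>k. if k \<in> S then A u k else 0)" for u
  define e where "e a = (\<lambda>k. if k = a then 1 else (0::real))" for a :: nat
  have rowind: "\<forall>u\<in>U. c u = 0" if h: "\<forall>k. (\<Sum>u\<in>U. c u * \<rho> u k) = 0" for c
  proof -
    have hS: "(\<Sum>u\<in>U. c u * A u k) = 0" if "k\<in>S" for k
      using h[rule_format, of k] that by (simp add: \<rho>_def)
    have "\<forall>k<r. (\<Sum>u\<in>U. c u * A u k) = 0"
    proof (intro allI impI)
      fix k assume "k<r"
      then obtain D where D: "\<forall>j<m. A j k = (\<Sum>k'\<in>S. D k' * A j k')" using spS by blast
      have "(\<Sum>u\<in>U. c u * A u k) = (\<Sum>u\<in>U. c u * (\<Sum>k'\<in>S. D k' * A u k'))"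
        by (rule sum.cong) (use D U(1) in auto)
      also have "\<dots> = (\<Sum>u\<in>U. \<Sum>k'\<in>S. D k' * (c u * A u k'))"
        by (simp add: sum_distrib_left mult.left_commute)
      also have "\<dots> = (\<Sum>k'\<in>S. \<Sum>u\<in>U. D k' * (c u * A u k'))"
        by (rule sum.swap)
      also have "\<dots> = (\<Sum>k'\<in>S. D k' * (\<Sum>u\<in>U. c u * A u k'))"
        by (simp add: sum_distrib_left)
      also have "\<dots> = 0" using hS by simp
      finally show "(\<Sum>u\<in>U. c u * A u k) = 0" .
    qed
    then show "\<forall>u\<in>U. c u = 0" using U(3) unfolding lin_indep_rows_def by blast
  qed
  have espan: "\<exists>d. \<forall>k. e a k = (\<Sum>u\<in>U. d u * \<rho> u k)" if a: "a \<in> S" for a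
  proof (rule ccontr)
    assume nsp: "\<not> (\<exists>d. \<forall>k. e a k = (\<Sum>u\<in>U. d u * \<rho> u k))"
    have mU: "m \<notin> U" using U(1) by auto
    have "card (insert m U) \<le> card S"
    proof (rule steinitz[of "insert m U" S "\<rho>(m := e a)" e])
      show "finite (insert m U)" using fU by simp
      show "finite S" by fact
      show "\<And>c. \<forall>j. (\<Sum>p\<in>insert m U. c p * (\<rho>(m := e a)) p j) = 0 \<Longrightarrow> \<forall>p\<in>insert m U. c p = 0"
        by (rule indep_ext[OF fU mU _ nsp]) (use rowind in auto)
      fix p assume "p \<in> insert m U"
      show "\<exists>d. \<forall>j. (\<rho>(m := e a)) p j = (\<Sum>q\<in>S. d q * e q j)"
      proof (cases "p = m")
        case True
        show ?thesis
          by (rule exI[of _ "e a"]) (use True a fS in \<open>auto simp: e_def sum_e\<close>)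
      next
        case False
        show ?thesis
          by (rule exI[of _ "\<lambda>q. A p q"]) (use False fS in \<open>auto simp: e_def sum_e \<rho>_def\<close>)
      qed
    qed
    with fU mU U(2) S(3) show False by simp
  qed
  then have ex: "\<forall>a\<in>S. \<exists>d. \<forall>k. e a k = (\<Sum>u\<in>U. d u * \<rho> u k)" by blast
  obtain Cf where Cf: "\<forall>a\<in>S. \<forall>k. e a k = (\<Sum>u\<in>U. Cf a u * \<rho> u k)"
    using bchoice[OF ex] by blast
  define C where "C a u = (if a \<in> S \<and> u \<in> U then Cf a u else 0)" for a u
  have left: "(\<Sum>u\<in>U. C a u * A u b) = (if a = b then 1 else 0)" if "a\<in>S" "b\<in>S" for a b
  proof -
    have "(\<Sum>u\<in>U. C a u * A u b) = (\<Sum>u\<in>U. Cf a u * \<rho> u b)"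
      by (rule sum.cong) (use that in \<open>auto simp: C_def \<rho>_def\<close>)
    also have "\<dots> = e a b" using Cf that by simp
    finally show ?thesis by (auto simp: e_def)
  qed
  have right: "(\<Sum>a\<in>S. A u' a * C a v) = (if u' = v then 1 else 0)" if u': "u'\<in>U" and v: "v\<in>U" for u' v
  proof -
    define c where "c u = (\<Sum>a\<in>S. A u' a * C a u) - (if u' = u then 1 else 0)" for u
    have "\<forall>k. (\<Sum>u\<in>U. c u * \<rho> u k) = 0"
    proof
      fix k show "(\<Sum>u\<in>U. c u * \<rho> u k) = 0"
      proof (cases "k \<in> S")
        case False thus ?thesis by (simp add: \<rho>_def)
      next
        case True
        have h1: "(\<Sum>u\<in>U. c u * \<rho> u k) = (\<Sum>u\<in>U. (\<Sum>a\<in>S. A u' a * C a u) * A u k) - (\<Sum>u\<in>U. (if u' = u then 1 else 0) * A u k)"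
          by (simp add: c_def \<rho>_def True left_diff_distrib sum_subtractf)
        have "(\<Sum>u\<in>U. (\<Sum>a\<in>S. A u' a * C a u) * A u k) = (\<Sum>u\<in>U. \<Sum>a\<in>S. A u' a * (C a u * A u k))"
          by (simp add: sum_distrib_right mult.assoc)
        also have "\<dots> = (\<Sum>a\<in>S. \<Sum>u\<in>U. A u' a * (C a u * A u k))" by (rule sum.swap)
        also have "\<dots> = (\<Sum>a\<in>S. A u' a * (\<Sum>u\<in>U. C a u * A u k))" by (simp add: sum_distrib_left)
        also have "\<dots> = (\<Sum>a\<in>S. A u' a * (if k = a then 1 else 0))"
          by (rule sum.cong) (use left True in auto)
        also have "\<dots> = A u' k" using sum_e[OF fS, of "A u'" k] True by simp
        finally have h2: "(\<Sum>u\<in>U. (\<Sum>a\<in>S. A u' a * C a u) * A u k) = A u' k" .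
        have h3: "(\<Sum>u\<in>U. (if u' = u then 1 else 0) * A u k) = A u' k"
          using sum_e2[OF fU, of u' "\<lambda>u. A u k"] u' by simp
        show ?thesis using h1 h2 h3 by simp
      qed
    qed
    from rowind[OF this] v have "c v = 0" by blast
    then show ?thesis by (simp add: c_def)
  qed
  define Pr where "Pr C \<longleftrightarrow> (\<forall>a b. a \<notin> S \<or> b \<notin> U \<longrightarrow> C a b = 0) \<and>
      (\<forall>a\<in>S. \<forall>b\<in>S. (\<Sum>u\<in>U. C a u * A u b) = (if a = b then 1 else 0)) \<and>
      (\<forall>u\<in>U. \<forall>v\<in>U. (\<Sum>a\<in>S. A u a * C a v) = (if u = v then 1 else 0))" for C
  have PC: "Pr C" unfolding Pr_def using left right by (auto simp: C_def)
  have uniq: "C' = C" if "Pr C'" for C'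
  proof (intro ext)
    fix a v
    show "C' a v = C a v"
    proof (cases "a \<in> S \<and> v \<in> U")
      case False then show ?thesis using that PC by (auto simp: Pr_def)
    next
      case True
      have l': "\<forall>a\<in>S. \<forall>b\<in>S. (\<Sum>u\<in>U. C' a u * A u b) = (if a = b then 1 else 0)"
        using that by (simp add: Pr_def)
      have "C' a v = (\<Sum>u\<in>U. C' a u * (if v = u then 1 else 0))"
        using sum_e[OF fU, of "C' a" v] True by simp
      also have "\<dots> = (\<Sum>u\<in>U. C' a u * (\<Sum>b\<in>S. A u b * C b v))"
        by (rule sum.cong) (use right True in auto)
      also have "\<dots> = (\<Sum>u\<in>U. \<Sum>b\<in>S. (C' a u * A u b) * C b v)"
        by (simp add: sum_distrib_left mult.assoc)
      also have "\<dots> = (\<Sum>b\<in>S. \<Sum>u\<in>U. (C' a u * A u b) * C b v)" by (rule sum.swap)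
      also have "\<dots> = (\<Sum>b\<in>S. (\<Sum>u\<in>U. C' a u * A u b) * C b v)" by (simp add: sum_distrib_right)
      also have "\<dots> = (\<Sum>b\<in>S. (if a = b then 1 else 0) * C b v)"
        by (rule sum.cong) (use l' True in auto)
      also have "\<dots> = C a v" using sum_e2[OF fS, of a "\<lambda>b. C b v"] True by simp
      finally show ?thesis .
    qed
  qed
  have "sub_inv A U S = C" unfolding sub_inv_def Pr_def[symmetric]
  proof (rule the_equality)
    show "Pr C" by (rule PC)
  next
    fix C' assume "Pr C'" then show "C' = C" by (rule uniq)
  qed
  then show ?thesis using left by simp
qed



theorem mainTheorem5:
  fixes M A W :: "nat \<Rightarrow> nat \<Rightarrow> real" and m n r s :: nat and U :: "nat set"
  assumes "nonneg_mat M m n"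
    and "nonneg_mat A m r"
    and "nonneg_mat W r n"
    and "is_product M A W m r n"
    and "stable_fact M A W m r n"
    and "s = mat_rank A m r"
    and "U \<subseteq> {..<m}" and "card U = s" and "lin_indep_rows A r U"
  shows "\<forall>i<n. \<exists>B\<in>ensemble A m r U. \<forall>k<r. W k i = (\<Sum>u\<in>U. B k u * M u i)"
proof (intro allI impI)
  fix i assume i: "i < n"
  let ?v = "\<lambda>j. M j i"
  have adm: "col_admissible A m ?v {..<r}"
    unfolding col_admissible_def
    by (rule exI[of _ "\<lambda>k. W k i"]) (use assms(3,4) i in \<open>auto simp: nonneg_mat_def is_product_def mult.commute\<close>)
  obtain Si where Si: "lexfirst_col_adm A m r ?v Si" using lexfirst_ex[OF _ adm] by blast
  have supp: "\<forall>k<r. k \<notin> Si \<longrightarrow> W k i = 0" using assms(5) Si i unfolding stable_fact_def by blast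
  have Sir: "Si \<subseteq> {..<r}" and Siadm: "col_admissible A m ?v Si"
    using Si by (auto simp: lexfirst_col_adm_def)
  have mn: "card Si \<le> card T" if "T \<subseteq> {..<r}" "col_admissible A m ?v T" for T
  proof -
    have "T = Si \<or> subset_lex_less Si T" using Si that unfolding lexfirst_col_adm_def by blast
    then show ?thesis by (auto simp: subset_lex_less_def)
  qed
  have indSi: "lin_indep_cols A m Si" by (rule carath[OF Sir Siadm mn])
  obtain S where S: "Si \<subseteq> S" "S \<subseteq> {..<r}" "lin_indep_cols A m S" "card S = mat_rank A m r"
    using extend_indep[OF Sir indSi] by blast
  have left: "\<forall>a\<in>S. \<forall>b\<in>S. (\<Sum>u\<in>U. sub_inv A U S a u * A u b) = (if a = b then 1 else 0)"
    using subinv_left[OF S(2,3,4)] assms(6-9) by blast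
  have fU: "finite U" using assms(7) finite_subset by blast
  have Bin: "ens_mat A U S \<in> ensemble A m r U" unfolding ensemble_def using S by blast
  show "\<exists>B\<in>ensemble A m r U. \<forall>k<r. W k i = (\<Sum>u\<in>U. B k u * M u i)"
  proof (rule bexI[OF _ Bin], intro allI impI)
    fix k assume k: "k < r"
    show "W k i = (\<Sum>u\<in>U. ens_mat A U S k u * M u i)"
    proof (cases "k \<in> S")
      case False
      then show ?thesis using supp k S(1) by (auto simp: ens_mat_def)
    next
      case True
      have "(\<Sum>u\<in>U. ens_mat A U S k u * M u i) = (\<Sum>u\<in>U. sub_inv A U S k u * (\<Sum>k'<r. A u k' * W k' i))"
        by (rule sum.cong) (use True assms(4,7) i in \<open>auto simp: ens_mat_def is_product_def\<close>)
      also have "\<dots> = (\<Sum>u\<in>U. \<Sum>k'<r. (sub_inv A U S k u * A u k') * W k' i)"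
        by (simp add: sum_distrib_left mult.assoc)
      also have "\<dots> = (\<Sum>k'<r. \<Sum>u\<in>U. (sub_inv A U S k u * A u k') * W k' i)" by (rule sum.swap)
      also have "\<dots> = (\<Sum>k'<r. (\<Sum>u\<in>U. sub_inv A U S k u * A u k') * W k' i)"
        by (simp add: sum_distrib_right)
      also have "\<dots> = (\<Sum>k'<r. (if k = k' then 1 else 0) * W k' i)"
      proof (rule sum.cong[OF refl])
        fix k' assume k': "k' \<in> {..<r}"
        show "(\<Sum>u\<in>U. sub_inv A U S k u * A u k') * W k' i = (if k = k' then 1 else 0) * W k' i"
        proof (cases "k' \<in> S")
          case True
          then show ?thesis using left \<open>k \<in> S\<close> by simp
        next
          case False
          then have "W k' i = 0" using supp k' S(1) by auto
          then show ?thesis by simp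
        qed
      qed
      also have "\<dots> = W k i" using sum_e2[of "{..<r}" k "\<lambda>k'. W k' i"] k by simp
      finally show ?thesis by simp
    qed
  qed
qed

end
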